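(* Let $\mathcal{X}$ be a finite set, $\mathcal{Z}$ a measurable space with a measure $\mu$, and $V:\mathcal{X}\to\mathcal{Z}$ a channel such that for each $x\in\mathcal{X}$ the probability measure $V(\cdot\mid x)$ has density $\omega(z\mid x)$ with respect to $\mu$. Let $\{f_s:\mathcal{X}\to\{0,1\}^k,\ s\in\mathcal{S}\}$ be a $b$-balanced $k$-bit UHF with finite seed set $\mathcal{S}$. Let $M$ be uniformly distributed on $\mathcal{M}=\{0,1\}^k$, let $S$ be uniformly distributed on $\mathcal{S}$ and independent of $M$, and given $M=m$, $S=s$, let $X$ be uniformly distributed on $f_s^{-1}(m)$; let $Z$ be the output of $V$ with input $X$ (so that, given $X$, $Z$ is conditionally independent of $(M,S)$ with law $V(\cdot\mid X)$). Then for every $\epsilon\in[0,1)$, \[ I(M\wedge Z,S)\le \frac{1}{\ln 2}\cdot 2^{-(b-I_{\max}^{\epsilon}(V))}+\epsilon k, \] where mutual information is measured in bits.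
   Context: A family $\{f_s: s\in\mathcal{S}\}$ of maps $f_s:\mathcal{X}\to\{0,1\}^k$ is a ($k$-bit) 2-universal hash family (UHF) if for all $x\neq x'$ in $\mathcal{X}$, $\frac{1}{|\mathcal{S}|}|\{s\in\mathcal{S}: f_s(x)=f_s(x')\}|\le 2^{-k}$. It is $b$-balanced if for every $s\in\mathcal{S}$ and every $m\in\{0,1\}^k$, $|\{x\in\mathcal{X}: f_s(x)=m\}|=2^b$. For a (possibly subnormalized) channel $V$ with densities $\omega(z\mid x)$ w.r.t. $\mu$, its max-information is $I_{\max}(V)=\log_2\int_{\mathcal{Z}}\max_{x\in\mathcal{X}}\omega(z\mid x)\,\mu(dz)$. For $\mathcal{T}\subseteq\mathcal{X}\times\mathcal{Z}$, $V_{\mathcal{T}}$ is the subnormalized channel with density $\omega_{\mathcal{T}}(z\mid x)=\omega(z\mid x)$ if $(x,z)\in\mathcal{T}$ and $0$ otherwise. The $\epsilon$-smooth max-information $I_{\max}^{\epsilon}(V)$ is the infimum of $I_{\max}(V_{\mathcal{T}})$ over all (measurable) $\mathcal{T}\subseteq\mathcal{X}\times\mathcal{Z}$ such that $V(\{z:(x,z)\in\mathcal{T}\}\mid x)\ge 1-\epsilon$ for all $x\in\mathcal{X}$. *)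

theory Defs
  imports "HOL-Probability.Probability"
begin

definition bitstrings :: "nat \<Rightarrow> bool list set" where
  "bitstrings k = {m. length m = k}"

definition is_UHF :: "'x set \<Rightarrow> 's set \<Rightarrow> nat \<Rightarrow> ('s \<Rightarrow> 'x \<Rightarrow> bool list) \<Rightarrow> bool" where
  "is_UHF X S k f \<longleftrightarrow>
     (\<forall>s\<in>S. \<forall>x\<in>X. f s x \<in> bitstrings k) \<and>
     (\<forall>x\<in>X. \<forall>x'\<in>X. x \<noteq> x' \<longrightarrow>
        real (card {s\<in>S. f s x = f s x'}) / real (card S) \<le> 2 powr (- real k))"

definition balanced :: "'x set \<Rightarrow> 's set \<Rightarrow> nat \<Rightarrow> nat \<Rightarrow> ('s \<Rightarrow> 'x \<Rightarrow> bool list) \<Rightarrow> bool" where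
  "balanced X S k b f \<longleftrightarrow>
     (\<forall>s\<in>S. \<forall>m\<in>bitstrings k. card {x\<in>X. f s x = m} = 2 ^ b)"

definition log2e :: "ennreal \<Rightarrow> ereal" where
  "log2e a = (if a = \<infinity> then \<infinity> else if a = 0 then -\<infinity> else ereal (log 2 (enn2real a)))"

definition Imax :: "'z measure \<Rightarrow> 'x set \<Rightarrow> ('x \<Rightarrow> 'z \<Rightarrow> real) \<Rightarrow> ereal" where
  "Imax \<mu> X \<omega> = log2e (\<integral>\<^sup>+ z. Max ((\<lambda>x. ennreal (\<omega> x z)) ` X) \<partial>\<mu>)"

definition restrict_density :: "('x \<times> 'z) set \<Rightarrow> ('x \<Rightarrow> 'z \<Rightarrow> real) \<Rightarrow> 'x \<Rightarrow> 'z \<Rightarrow> real" where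
  "restrict_density T \<omega> x z = (if (x, z) \<in> T then \<omega> x z else 0)"

definition Imax_smooth :: "real \<Rightarrow> 'z measure \<Rightarrow> 'x set \<Rightarrow> ('x \<Rightarrow> 'z \<Rightarrow> real) \<Rightarrow> ereal" where
  "Imax_smooth \<epsilon> \<mu> X \<omega> =
     (INF T \<in> {T. T \<in> sets (count_space X \<Otimes>\<^sub>M \<mu>) \<and>
                  (\<forall>x\<in>X. emeasure (density \<mu> (\<lambda>z. ennreal (\<omega> x z))) {z \<in> space \<mu>. (x, z) \<in> T}
                          \<ge> ennreal (1 - \<epsilon>))}.
        Imax \<mu> X (restrict_density T \<omega>))"

definition pow2e :: "ereal \<Rightarrow> ereal" where
  "pow2e a = (case a of ereal r \<Rightarrow> ereal (2 powr r) | PInfty \<Rightarrow> \<infinity> | MInfty \<Rightarrow> 0)"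

definition MSX_pmf :: "'x set \<Rightarrow> 's set \<Rightarrow> nat \<Rightarrow> ('s \<Rightarrow> 'x \<Rightarrow> bool list)
                        \<Rightarrow> (bool list \<times> 's \<times> 'x) pmf" where
  "MSX_pmf X S k f =
     bind_pmf (pmf_of_set (bitstrings k)) (\<lambda>m.
     bind_pmf (pmf_of_set S) (\<lambda>s.
     bind_pmf (pmf_of_set {x\<in>X. f s x = m}) (\<lambda>x.
     return_pmf (m, s, x))))"

definition joint_MSXZ :: "'x set \<Rightarrow> 's set \<Rightarrow> nat \<Rightarrow> ('s \<Rightarrow> 'x \<Rightarrow> bool list)
       \<Rightarrow> 'z measure \<Rightarrow> ('x \<Rightarrow> 'z \<Rightarrow> real) \<Rightarrow> ((bool list \<times> 's \<times> 'x) \<times> 'z) measure" where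
  "joint_MSXZ X S k f \<mu> \<omega> =
     measure_pmf (MSX_pmf X S k f) \<bind>
       (\<lambda>(m, s, x). distr (density \<mu> (\<lambda>z. ennreal (\<omega> x z)))
                          (count_space UNIV \<Otimes>\<^sub>M \<mu>) (\<lambda>z. ((m, s, x), z)))"

end

theory Submission
  imports Defs
begin

lemma card_bitstrings: "card (bitstrings k) = 2 ^ k"
proof -
  have "bitstrings k = {xs. set xs \<subseteq> (UNIV::bool set) \<and> length xs = k}"
    by (auto simp: bitstrings_def)
  then show ?thesis using card_lists_length_eq[of "UNIV::bool set" k] by simp
qed

lemma finite_bitstrings: "finite (bitstrings k)"
proof -
  have "bitstrings k = {xs. set xs \<subseteq> (UNIV::bool set) \<and> length xs = k}"
    by (auto simp: bitstrings_def)
  then show ?thesis using finite_lists_length_eq[of "UNIV::bool set" k] by simp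
qed

lemma bind_pmf_measure_cong:
  assumes "\<And>t. t \<in> set_pmf p \<Longrightarrow> K t = K' t" "\<And>t. sets (K t) = sets N" "\<And>t. sets (K' t) = sets N"
  shows "measure_pmf p \<bind> K = measure_pmf p \<bind> K'"
proof -
  have e: "(\<lambda>A. emeasure (measure_pmf p) (K -` A \<inter> space (measure_pmf p))) =
        (\<lambda>A. emeasure (measure_pmf p) (K' -` A \<inter> space (measure_pmf p)))"
  proof
    fix A
    have "K -` A \<inter> space (measure_pmf p) \<inter> set_pmf p = K' -` A \<inter> space (measure_pmf p) \<inter> set_pmf p"
      using assms(1) by auto
    then show "emeasure (measure_pmf p) (K -` A \<inter> space (measure_pmf p)) =
        emeasure (measure_pmf p) (K' -` A \<inter> space (measure_pmf p))"
      by (metis emeasure_Int_set_pmf)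
  qed
  have d: "distr (measure_pmf p) (subprob_algebra N) K = distr (measure_pmf p) (subprob_algebra N) K'"
    unfolding distr_def e ..
  show ?thesis
    by (simp add: bind_nonempty subprob_algebra_cong[OF assms(2)] subprob_algebra_cong[OF assms(3)] d)
qed

locale L4 =
  fixes X :: "'x set" and S :: "'s set" and k b :: nat
    and f :: "'s \<Rightarrow> 'x \<Rightarrow> bool list"
    and \<mu> :: "'z measure" and \<omega> :: "'x \<Rightarrow> 'z \<Rightarrow> real"
  assumes X_fin: "finite X"
    and S_fin: "finite S" and S_ne: "S \<noteq> {}"
    and uhf: "is_UHF X S k f" and bal: "balanced X S k b f"
    and \<omega>_meas: "\<And>x. x \<in> X \<Longrightarrow> \<omega> x \<in> borel_measurable \<mu>"
    and \<omega>_nonneg: "\<And>x z. x \<in> X \<Longrightarrow> z \<in> space \<mu> \<Longrightarrow> 0 \<le> \<omega> x z"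
    and \<omega>_prob: "\<And>x. x \<in> X \<Longrightarrow> (\<integral>\<^sup>+ z. ennreal (\<omega> x z) \<partial>\<mu>) = 1"
begin

lemma f_range: "s \<in> S \<Longrightarrow> x \<in> X \<Longrightarrow> f s x \<in> bitstrings k"
  using uhf by (auto simp: is_UHF_def)

lemma fib_card: "s \<in> S \<Longrightarrow> m \<in> bitstrings k \<Longrightarrow> card {x\<in>X. f s x = m} = 2^b"
  using bal by (auto simp: balanced_def)

lemma fib_ne: "s \<in> S \<Longrightarrow> m \<in> bitstrings k \<Longrightarrow> {x\<in>X. f s x = m} \<noteq> {}"
proof
  assume "s \<in> S" "m \<in> bitstrings k" "{x\<in>X. f s x = m} = {}"
  then show False using fib_card[of s m] by (metis card.empty power_eq_0_iff zero_neq_numeral)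
qed

lemma sum_fib: "s \<in> S \<Longrightarrow> (\<Sum>m\<in>bitstrings k. \<Sum>x\<in>{x\<in>X. f s x = m}. h x) = (\<Sum>x\<in>X. h x)"
  by (rule sum.group) (auto simp: X_fin finite_bitstrings f_range)

lemma card_X: "card X = 2^(k+b)"
proof -
  obtain s where s: "s \<in> S" using S_ne by auto
  have "card X = (\<Sum>x\<in>X. 1::nat)" by simp
  also have "\<dots> = (\<Sum>m\<in>bitstrings k. \<Sum>x\<in>{x\<in>X. f s x = m}. 1)" using sum_fib[OF s, of "\<lambda>_. 1::nat"] by simp
  also have "\<dots> = (\<Sum>m\<in>bitstrings k. 2^b)" using fib_card[OF s] by simp
  also have "\<dots> = 2^k * 2^b" by (simp add: card_bitstrings)
  finally show ?thesis by (simp add: power_add)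
qed

lemma X_ne: "X \<noteq> {}"
  using card_X by auto


definition "cc = 1 / (real (card S) * 2^(k+b))"
lemma cc_nonneg: "0 \<le> cc" by (simp add: cc_def)
definition "x0 = (SOME x. x \<in> X)"
lemma x0: "x0 \<in> X" unfolding x0_def using X_ne by (simp add: some_in_eq)

definition "pp = MSX_pmf X S k f"

lemma set_pp: "t \<in> set_pmf pp \<Longrightarrow> snd (snd t) \<in> X \<and> fst (snd t) \<in> S \<and> fst t \<in> bitstrings k \<and> f (fst (snd t)) (snd (snd t)) = fst t"
proof -
  have bne: "bitstrings k \<noteq> {}" using card_bitstrings[of k] by auto
  have 1: "set_pmf (pmf_of_set (bitstrings k)) = bitstrings k"
    using bne finite_bitstrings by simp
  have 2: "set_pmf (pmf_of_set {x\<in>X. f s x = m}) = {x\<in>X. f s x = m}" if "s \<in> S" "m \<in> bitstrings k" for s m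
    using fib_ne[OF that] X_fin by simp
  assume "t \<in> set_pmf pp"
  then show ?thesis
    unfolding pp_def MSX_pmf_def using S_fin S_ne by (auto simp: 1 2)
qed

lemma nn_pp: "(\<integral>\<^sup>+ t. F t \<partial>measure_pmf pp) = (\<Sum>s\<in>S. \<Sum>x\<in>X. F (f s x, s, x)) * ennreal cc"
proof -
  have bne: "bitstrings k \<noteq> {}" using card_bitstrings[of k] by auto
  have "(\<integral>\<^sup>+ t. F t \<partial>measure_pmf pp) = (\<Sum>m\<in>bitstrings k. (\<Sum>s\<in>S. (\<Sum>x\<in>{x\<in>X. f s x = m}. F (m,s,x)) / of_nat (2^b)) / of_nat (card S)) / of_nat (2^k)"
    unfolding pp_def MSX_pmf_def
    apply (simp add: nn_integral_pmf_of_set finite_bitstrings bne S_fin S_ne)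
    apply (simp add: card_bitstrings)
    apply (intro arg_cong[where f="\<lambda>x. x / _"] sum.cong refl arg_cong[where f="\<lambda>x. x / _"])
    apply (subst nn_integral_pmf_of_set)
    using fib_ne fib_card X_fin by auto
  also have "\<dots> = (\<Sum>m\<in>bitstrings k. \<Sum>s\<in>S. \<Sum>x\<in>{x\<in>X. f s x = m}. F (m,s,x)) * (inverse (of_nat (2^b)) * inverse (of_nat (card S)) * inverse (of_nat (2^k)))"
    by (simp add: divide_ennreal_def sum_distrib_right mult.assoc)
  also have "(\<Sum>m\<in>bitstrings k. \<Sum>s\<in>S. \<Sum>x\<in>{x\<in>X. f s x = m}. F (m,s,x)) = (\<Sum>s\<in>S. \<Sum>x\<in>X. F (f s x, s, x))"
    apply (subst sum.swap)
    apply (intro sum.cong refl)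
    apply (subst sum_fib[symmetric], assumption)
    apply (intro sum.cong refl)
    by auto
  also have "(inverse (of_nat (2^b)) * inverse (of_nat (card S)) * inverse (of_nat (2^k)) :: ennreal) = ennreal cc"
    using S_fin S_ne
    by (simp add: cc_def ennreal_of_nat_eq_real_of_nat inverse_ennreal ennreal_mult'[symmetric] power_add divide_inverse card_gt_0_iff mult_ac)
  finally show ?thesis .
qed


definition "NN = (count_space UNIV \<Otimes>\<^sub>M \<mu> :: ((bool list \<times> 's \<times> 'x) \<times> 'z) measure)"
definition "J = joint_MSXZ X S k f \<mu> \<omega>"
definition "Kp t = distr (density \<mu> (\<lambda>z. ennreal (\<omega> (if snd (snd t) \<in> X then snd (snd t) else x0) z))) NN (\<lambda>z. (t, z))"

lemma prob_dens: "x \<in> X \<Longrightarrow> prob_space (density \<mu> (\<lambda>z. ennreal (\<omega> x z)))"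
proof (rule prob_spaceI)
  assume x: "x \<in> X"
  have [measurable]: "\<omega> x \<in> borel_measurable \<mu>" using \<omega>_meas[OF x] .
  have "emeasure (density \<mu> (\<lambda>z. ennreal (\<omega> x z))) (space \<mu>) = (\<integral>\<^sup>+ z. ennreal (\<omega> x z) * indicator (space \<mu>) z \<partial>\<mu>)"
    by (rule emeasure_density) auto
  also have "\<dots> = (\<integral>\<^sup>+ z. ennreal (\<omega> x z) \<partial>\<mu>)" by (rule nn_integral_cong) auto
  finally show "emeasure (density \<mu> (\<lambda>z. ennreal (\<omega> x z))) (space (density \<mu> (\<lambda>z. ennreal (\<omega> x z)))) = 1"
    using \<omega>_prob[OF x] by simp
qed

lemma meas_pair_t: "(\<lambda>z. (t, z)) \<in> measurable (density \<mu> g) NN"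
proof -
  have "(\<lambda>z. (t, z)) \<in> measurable \<mu> NN" unfolding NN_def by measurable
  moreover have "measurable (density \<mu> g) NN = measurable \<mu> NN" by (rule measurable_cong_sets) auto
  ultimately show ?thesis by simp
qed

lemma Kp_prob: "prob_space (Kp t)" and sets_Kp: "sets (Kp t) = sets NN"
proof -
  have x: "(if snd (snd t) \<in> X then snd (snd t) else x0) \<in> X" using x0 by auto
  show "prob_space (Kp t)" unfolding Kp_def
    by (rule prob_space.prob_space_distr[OF prob_dens[OF x] meas_pair_t])
  show "sets (Kp t) = sets NN" unfolding Kp_def by simp
qed

lemma Kp_meas: "Kp \<in> measurable (measure_pmf pp) (subprob_algebra NN)"
  by (simp add: space_subprob_algebra prob_space_imp_subprob_space Kp_prob sets_Kp)

lemma J_eq: "J = measure_pmf pp \<bind> Kp"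
  unfolding J_def joint_MSXZ_def pp_def[symmetric]
proof (rule bind_pmf_measure_cong[where N=NN])
  fix t assume t: "t \<in> set_pmf pp"
  obtain m s x where tt: "t = (m, s, x)" by (cases t) auto
  show "(case t of (m, s, x) \<Rightarrow> distr (density \<mu> (\<lambda>z. ennreal (\<omega> x z))) (count_space UNIV \<Otimes>\<^sub>M \<mu>) (\<lambda>z. ((m, s, x), z))) = Kp t"
    using set_pp[OF t] by (simp add: tt Kp_def NN_def)
next
  fix t :: "bool list \<times> 's \<times> 'x"
  show "sets (case t of (m, s, x) \<Rightarrow> distr (density \<mu> (\<lambda>z. ennreal (\<omega> x z))) (count_space UNIV \<Otimes>\<^sub>M \<mu>) (\<lambda>z. ((m, s, x), z))) = sets NN"
    by (cases t) (simp add: NN_def)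
qed (rule sets_Kp)

lemma prob_J: "prob_space J"
  unfolding J_eq
  by (rule measure_pmf.prob_space_bind[OF _ Kp_meas]) (simp add: Kp_prob)

lemma sets_J[measurable_cong]: "sets J = sets NN"
  unfolding J_eq by (rule sets_bind) (auto simp: sets_Kp)

lemma space_J: "space J = space NN"
  using sets_J by (rule sets_eq_imp_space_eq)

lemma nnJ:
  assumes h[measurable]: "h \<in> borel_measurable NN"
  shows "(\<integral>\<^sup>+ \<xi>. h \<xi> \<partial>J) = (\<Sum>s\<in>S. \<Sum>x\<in>X. \<integral>\<^sup>+ z. ennreal (\<omega> x z) * h ((f s x, s, x), z) \<partial>\<mu>) * ennreal cc"
proof -
  have "(\<integral>\<^sup>+ \<xi>. h \<xi> \<partial>J) = (\<integral>\<^sup>+ t. \<integral>\<^sup>+ y. h y \<partial>Kp t \<partial>measure_pmf pp)"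
    unfolding J_eq by (rule nn_integral_bind[OF h Kp_meas])
  also have "\<dots> = (\<Sum>s\<in>S. \<Sum>x\<in>X. \<integral>\<^sup>+ y. h y \<partial>Kp (f s x, s, x)) * ennreal cc"
    by (rule nn_pp)
  also have "(\<Sum>s\<in>S. \<Sum>x\<in>X. \<integral>\<^sup>+ y. h y \<partial>Kp (f s x, s, x)) = (\<Sum>s\<in>S. \<Sum>x\<in>X. \<integral>\<^sup>+ z. ennreal (\<omega> x z) * h ((f s x, s, x), z) \<partial>\<mu>)"
  proof (intro sum.cong refl)
    fix s x assume x: "x \<in> X"
    have [measurable]: "\<omega> x \<in> borel_measurable \<mu>" using \<omega>_meas[OF x] .
    have hm: "h \<in> borel_measurable (distr (density \<mu> (\<lambda>z. ennreal (\<omega> x z))) NN (\<lambda>z. ((f s x, s, x), z)))"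
      using h by (simp cong: measurable_cong_sets)
    have "(\<lambda>z. h ((f s x, s, x), z)) \<in> borel_measurable \<mu>"
      using h unfolding NN_def by measurable
    then show "(\<integral>\<^sup>+ y. h y \<partial>Kp (f s x, s, x)) = (\<integral>\<^sup>+ z. ennreal (\<omega> x z) * h ((f s x, s, x), z) \<partial>\<mu>)"
      unfolding Kp_def using x
      by (simp add: nn_integral_distr[OF meas_pair_t hm] nn_integral_density)
  qed
  finally show ?thesis .
qed


definition "w x z = max 0 (\<omega> x z)"
definition "\<sigma> z = (\<Sum>x\<in>X. w x z)"
definition "FF s m z = (\<Sum>x\<in>X. if f s x = m then w x z else 0)"
definition gg :: "bool list \<times> ('z \<times> 's) \<Rightarrow> real" where
  "gg y = (if \<sigma> (fst (snd y)) > 0 then 2^k * FF (snd (snd y)) (fst y) (fst (snd y)) / \<sigma> (fst (snd y)) else 0)"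
definition Xv :: "(bool list \<times> 's \<times> 'x) \<times> 'z \<Rightarrow> bool list" where "Xv \<xi> = fst (fst \<xi>)"
definition Yv :: "(bool list \<times> 's \<times> 'x) \<times> 'z \<Rightarrow> 'z \<times> 's" where "Yv \<xi> = (snd \<xi>, fst (snd (fst \<xi>)))"
definition "CM = (count_space UNIV :: bool list measure)"
definition "TT = (\<mu> \<Otimes>\<^sub>M count_space UNIV :: ('z \<times> 's) measure)"
definition "PM = distr J CM Xv"
definition "PY = distr J TT Yv"
definition "QQ = distr J (CM \<Otimes>\<^sub>M TT) (\<lambda>\<xi>. (Xv \<xi>, Yv \<xi>))"

lemma w_nonneg: "0 \<le> w x z" by (simp add: w_def)
lemma ennreal_w: "ennreal (w x z) = ennreal (\<omega> x z)"
  by (simp add: w_def max_def ennreal_neg)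
lemma w_meas[measurable]: "x \<in> X \<Longrightarrow> w x \<in> borel_measurable \<mu>"
  unfolding w_def[abs_def] using \<omega>_meas by measurable
lemma \<sigma>_nonneg: "0 \<le> \<sigma> z" by (simp add: \<sigma>_def sum_nonneg w_nonneg)
lemma FF_nonneg: "0 \<le> FF s m z" by (simp add: FF_def sum_nonneg w_nonneg)
lemma FF_le: "FF s m z \<le> \<sigma> z"
  unfolding FF_def \<sigma>_def by (intro sum_mono) (auto simp: w_nonneg)
lemma gg_nonneg: "0 \<le> gg y" by (simp add: gg_def FF_nonneg)
lemma gg_le: "gg y \<le> 2^k"
proof -
  have "FF (snd (snd y)) (fst y) (fst (snd y)) / \<sigma> (fst (snd y)) \<le> 1" if "\<sigma> (fst (snd y)) > 0"
    using that FF_le by simp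
  then show ?thesis unfolding gg_def
    using mult_left_le[of _ "2^k::real"] by (auto simp: times_divide_eq_right[symmetric] simp del: times_divide_eq_right)
qed
lemma \<sigma>_gg: "\<sigma> z * gg (m, z, s) = 2^k * FF s m z"
proof (cases "\<sigma> z > 0")
  case True then show ?thesis by (simp add: gg_def)
next
  case False
  then have "\<sigma> z = 0" using \<sigma>_nonneg[of z] by simp
  then have "\<forall>x\<in>X. w x z = 0" unfolding \<sigma>_def using sum_nonneg_eq_0_iff[OF X_fin, of "\<lambda>x. w x z"] w_nonneg by auto
  then have "FF s m z = 0" unfolding FF_def by (intro sum.neutral) auto
  then show ?thesis using \<open>\<sigma> z = 0\<close> by simp
qed

lemma \<sigma>_meas[measurable]: "\<sigma> \<in> borel_measurable \<mu>"
  unfolding \<sigma>_def[abs_def] by (rule borel_measurable_sum) (simp add: w_meas)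

lemma gg_meas[measurable]: "gg \<in> borel_measurable (CM \<Otimes>\<^sub>M TT)"
proof -
  have "(\<lambda>y. (\<lambda>i y. if \<sigma> (fst (snd y)) > 0 then 2^k * FF (snd (snd y)) i (fst (snd y)) / \<sigma> (fst (snd y)) else 0) (fst y) y) \<in> borel_measurable (CM \<Otimes>\<^sub>M TT)"
  proof (rule measurable_compose_countable'[where I=UNIV and g=fst and f="\<lambda>i y. if \<sigma> (fst (snd y)) > 0 then 2^k * FF (snd (snd y)) i (fst (snd y)) / \<sigma> (fst (snd y)) else 0"])
    fix i :: "bool list"
    have [measurable]: "(\<lambda>y. FF (snd (snd y)) i (fst (snd y))) \<in> borel_measurable (CM \<Otimes>\<^sub>M (\<mu> \<Otimes>\<^sub>M count_space UNIV))"
      unfolding FF_def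
    proof (rule borel_measurable_sum)
      fix x assume x: "x \<in> X"
      have m1: "(\<lambda>y::bool list \<times> 'z \<times> 's. snd (snd y)) \<in> measurable (CM \<Otimes>\<^sub>M (\<mu> \<Otimes>\<^sub>M count_space UNIV)) (count_space UNIV)"
        by measurable
      have "(\<lambda>s. f s x) \<in> measurable (count_space UNIV) (count_space UNIV)" by simp
      from measurable_compose[OF m1 this]
      have [measurable]: "(\<lambda>y::bool list \<times> 'z \<times> 's. f (snd (snd y)) x) \<in> measurable (CM \<Otimes>\<^sub>M (\<mu> \<Otimes>\<^sub>M count_space UNIV)) (count_space UNIV)" .
      show "(\<lambda>y. if f (snd (snd y)) x = i then w x (fst (snd y)) else 0) \<in> borel_measurable (CM \<Otimes>\<^sub>M (\<mu> \<Otimes>\<^sub>M count_space UNIV))"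
        using x by measurable
    qed
    show "(\<lambda>y. if \<sigma> (fst (snd y)) > 0 then 2^k * FF (snd (snd y)) i (fst (snd y)) / \<sigma> (fst (snd y)) else 0) \<in> borel_measurable (CM \<Otimes>\<^sub>M TT)"
      unfolding TT_def by measurable
  next
    show "fst \<in> measurable (CM \<Otimes>\<^sub>M TT) (count_space UNIV)" unfolding CM_def by measurable
  qed auto
  then show ?thesis by (simp add: gg_def[abs_def])
qed

lemma Xv_meas[measurable]: "Xv \<in> measurable J CM"
proof -
  have "(\<lambda>t::bool list\<times>'s\<times>'x. fst t) \<in> measurable (count_space UNIV) CM" by (simp add: CM_def)
  then have "Xv \<in> measurable NN CM" unfolding NN_def Xv_def[abs_def]
    by (rule measurable_compose[OF measurable_fst])
  then show ?thesis by (simp cong: measurable_cong_sets[OF sets_J refl])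
qed

lemma Yv_meas[measurable]: "Yv \<in> measurable J TT"
proof -
  have "(\<lambda>t::bool list\<times>'s\<times>'x. fst (snd t)) \<in> measurable (count_space UNIV) (count_space UNIV)" by simp
  then have "(\<lambda>\<xi>::(bool list\<times>'s\<times>'x)\<times>'z. fst (snd (fst \<xi>))) \<in> measurable NN (count_space UNIV)" unfolding NN_def
    by (rule measurable_compose[OF measurable_fst])
  then have "Yv \<in> measurable NN TT" unfolding NN_def TT_def Yv_def[abs_def]
    by measurable
  then show ?thesis by (simp cong: measurable_cong_sets[OF sets_J refl])
qed


lemma Xv_NN[measurable]: "Xv \<in> measurable NN CM"
  using Xv_meas by (simp cong: measurable_cong_sets[OF sets_J refl])
lemma Yv_NN[measurable]: "Yv \<in> measurable NN TT"
  using Yv_meas by (simp cong: measurable_cong_sets[OF sets_J refl])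

lemma nn_PM: "(\<integral>\<^sup>+ m. G m \<partial>PM) = (\<Sum>m\<in>bitstrings k. G m) * ennreal (1 / 2^k)"
proof -
  have Gm: "G \<in> borel_measurable PM" by (simp add: PM_def CM_def)
  have Gm2: "(\<lambda>\<xi>. G (Xv \<xi>)) \<in> borel_measurable NN"
    by (rule measurable_compose[OF Xv_NN]) (simp add: CM_def)
  have "(\<integral>\<^sup>+ m. G m \<partial>PM) = (\<integral>\<^sup>+ \<xi>. G (Xv \<xi>) \<partial>J)"
    using Gm unfolding PM_def by (rule nn_integral_distr[OF Xv_meas])
  also have "\<dots> = (\<Sum>s\<in>S. \<Sum>x\<in>X. \<integral>\<^sup>+ z. ennreal (\<omega> x z) * G (f s x) \<partial>\<mu>) * ennreal cc"
    using nnJ[OF Gm2] by (simp add: Xv_def)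
  also have "(\<Sum>s\<in>S. \<Sum>x\<in>X. \<integral>\<^sup>+ z. ennreal (\<omega> x z) * G (f s x) \<partial>\<mu>) = (\<Sum>s\<in>S. \<Sum>x\<in>X. G (f s x))"
  proof (intro sum.cong refl)
    fix s x assume x: "x \<in> X"
    have [measurable]: "\<omega> x \<in> borel_measurable \<mu>" using \<omega>_meas[OF x] .
    show "(\<integral>\<^sup>+ z. ennreal (\<omega> x z) * G (f s x) \<partial>\<mu>) = G (f s x)"
      by (simp add: nn_integral_multc \<omega>_prob[OF x])
  qed
  also have "\<dots> = (\<Sum>s\<in>S. of_nat (2^b) * (\<Sum>m\<in>bitstrings k. G m))"
  proof (intro sum.cong refl)
    fix s assume s: "s \<in> S"
    have "(\<Sum>x\<in>X. G (f s x)) = (\<Sum>m\<in>bitstrings k. \<Sum>x\<in>{x\<in>X. f s x = m}. G (f s x))"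
      by (rule sum_fib[OF s, of "\<lambda>x. G (f s x)", symmetric])
    also have "\<dots> = (\<Sum>m\<in>bitstrings k. \<Sum>x\<in>{x\<in>X. f s x = m}. G m)"
      by (intro sum.cong refl) auto
    also have "\<dots> = (\<Sum>m\<in>bitstrings k. of_nat (2^b) * G m)"
      by (intro sum.cong refl) (simp add: fib_card[OF s])
    finally show "(\<Sum>x\<in>X. G (f s x)) = of_nat (2^b) * (\<Sum>m\<in>bitstrings k. G m)"
      by (simp add: sum_distrib_left)
  qed
  also have "\<dots> = of_nat (card S) * of_nat (2^b) * (\<Sum>m\<in>bitstrings k. G m)" by (simp add: mult.assoc)
  also have "\<dots> * ennreal cc = (\<Sum>m\<in>bitstrings k. G m) * ennreal (1 / 2^k)"
  proof -
    have "(of_nat (card S) * of_nat (2^b) :: ennreal) * ennreal cc = ennreal (real (card S) * 2^b * cc)"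
      using cc_nonneg by (simp add: ennreal_of_nat_eq_real_of_nat ennreal_mult)
    also have "real (card S) * 2^b * cc = 1 / 2^k"
      using S_fin S_ne by (simp add: cc_def power_add card_gt_0_iff field_simps)
    finally have e: "(of_nat (card S) * of_nat (2^b) :: ennreal) * ennreal cc = ennreal (1 / 2^k)" .
    have "of_nat (card S) * of_nat (2^b) * (\<Sum>m\<in>bitstrings k. G m) * ennreal cc = (\<Sum>m\<in>bitstrings k. G m) * ((of_nat (card S) * of_nat (2^b)) * ennreal cc)"
      by (simp only: mult_ac)
    then show ?thesis by (simp only: e)
  qed
  finally show ?thesis .
qed

lemma nn_PY:
  assumes H[measurable]: "H \<in> borel_measurable TT"
  shows "(\<integral>\<^sup>+ y. H y \<partial>PY) = (\<Sum>s\<in>S. \<integral>\<^sup>+ z. ennreal (\<sigma> z) * H (z, s) \<partial>\<mu>) * ennreal cc"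
proof -
  have Hm: "H \<in> borel_measurable PY" using H by (simp add: PY_def)
  have Hm2: "(\<lambda>\<xi>. H (Yv \<xi>)) \<in> borel_measurable NN"
    by (rule measurable_compose[OF Yv_NN H])
  have Hz[measurable]: "(\<lambda>z. H (z, s)) \<in> borel_measurable \<mu>" for s
    using H unfolding TT_def by measurable
  have "(\<integral>\<^sup>+ y. H y \<partial>PY) = (\<integral>\<^sup>+ \<xi>. H (Yv \<xi>) \<partial>J)"
    using Hm unfolding PY_def by (rule nn_integral_distr[OF Yv_meas])
  also have "\<dots> = (\<Sum>s\<in>S. \<Sum>x\<in>X. \<integral>\<^sup>+ z. ennreal (\<omega> x z) * H (z, s) \<partial>\<mu>) * ennreal cc"
    using nnJ[OF Hm2] by (simp add: Yv_def)
  also have "(\<Sum>s\<in>S. \<Sum>x\<in>X. \<integral>\<^sup>+ z. ennreal (\<omega> x z) * H (z, s) \<partial>\<mu>) = (\<Sum>s\<in>S. \<integral>\<^sup>+ z. ennreal (\<sigma> z) * H (z, s) \<partial>\<mu>)"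
  proof (intro sum.cong refl)
    fix s
    have "(\<Sum>x\<in>X. \<integral>\<^sup>+ z. ennreal (\<omega> x z) * H (z, s) \<partial>\<mu>) = (\<integral>\<^sup>+ z. (\<Sum>x\<in>X. ennreal (\<omega> x z) * H (z, s)) \<partial>\<mu>)"
      by (rule nn_integral_sum[symmetric]) (use \<omega>_meas in measurable)
    also have "\<dots> = (\<integral>\<^sup>+ z. ennreal (\<sigma> z) * H (z, s) \<partial>\<mu>)"
    proof (rule nn_integral_cong)
      fix z
      have "(\<Sum>x\<in>X. ennreal (\<omega> x z)) = ennreal (\<sigma> z)"
        unfolding \<sigma>_def ennreal_w[symmetric] by (rule sum_ennreal) (simp add: w_nonneg)
      then show "(\<Sum>x\<in>X. ennreal (\<omega> x z) * H (z, s)) = ennreal (\<sigma> z) * H (z, s)"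
        by (simp add: sum_distrib_right[symmetric])
    qed
    finally show "(\<Sum>x\<in>X. \<integral>\<^sup>+ z. ennreal (\<omega> x z) * H (z, s) \<partial>\<mu>) = (\<integral>\<^sup>+ z. ennreal (\<sigma> z) * H (z, s) \<partial>\<mu>)" .
  qed
  finally show ?thesis .
qed


lemma prob_PM: "prob_space PM" unfolding PM_def by (rule prob_space.prob_space_distr[OF prob_J Xv_meas])
lemma prob_PY: "prob_space PY" unfolding PY_def by (rule prob_space.prob_space_distr[OF prob_J Yv_meas])
lemma sets_P: "sets (PM \<Otimes>\<^sub>M PY) = sets (CM \<Otimes>\<^sub>M TT)"
  by (rule sets_pair_measure_cong) (simp_all add: PM_def PY_def)

lemma QQ_density: "QQ = density (PM \<Otimes>\<^sub>M PY) (\<lambda>y. ennreal (gg y))"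
proof (rule measure_eqI)
  show "sets QQ = sets (density (PM \<Otimes>\<^sub>M PY) (\<lambda>y. ennreal (gg y)))"
    by (simp add: QQ_def sets_P)
next
  fix E assume "E \<in> sets QQ"
  then have E[measurable]: "E \<in> sets (CM \<Otimes>\<^sub>M TT)" by (simp add: QQ_def)
  interpret PY: prob_space PY by (rule prob_PY)
  have FXY[measurable]: "(\<lambda>\<xi>. (Xv \<xi>, Yv \<xi>)) \<in> measurable J (CM \<Otimes>\<^sub>M TT)" by measurable
  have FXY2[measurable]: "(\<lambda>\<xi>. (Xv \<xi>, Yv \<xi>)) \<in> measurable NN (CM \<Otimes>\<^sub>M TT)" by measurable
  define I where "I s x m = (\<integral>\<^sup>+ z. ennreal (\<omega> x z) * indicator E (m, z, s) \<partial>\<mu>)" for s x m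
  have "emeasure QQ E = (\<integral>\<^sup>+ y. indicator E y \<partial>QQ)"
    by (simp add: QQ_def)
  also have "\<dots> = (\<integral>\<^sup>+ \<xi>. indicator E (Xv \<xi>, Yv \<xi>) \<partial>J)"
    unfolding QQ_def by (rule nn_integral_distr[OF FXY]) simp
  also have "\<dots> = (\<Sum>s\<in>S. \<Sum>x\<in>X. I s x (f s x)) * ennreal cc"
  proof -
    have "(\<lambda>\<xi>. indicator E (Xv \<xi>, Yv \<xi>) :: ennreal) \<in> borel_measurable NN" by measurable
    from nnJ[OF this] show ?thesis by (simp add: Xv_def Yv_def I_def)
  qed
  finally have lhs: "emeasure QQ E = (\<Sum>s\<in>S. \<Sum>x\<in>X. I s x (f s x)) * ennreal cc" .

  have gm[measurable]: "(\<lambda>y. ennreal (gg y) * indicator E y) \<in> borel_measurable (PM \<Otimes>\<^sub>M PY)"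
    by (simp cong: measurable_cong_sets[OF sets_P refl])
  have "emeasure (density (PM \<Otimes>\<^sub>M PY) (\<lambda>y. ennreal (gg y))) E = (\<integral>\<^sup>+ y. ennreal (gg y) * indicator E y \<partial>(PM \<Otimes>\<^sub>M PY))"
    by (rule emeasure_density) (simp_all add: sets_P cong: measurable_cong_sets[OF sets_P refl])
  also have "\<dots> = (\<integral>\<^sup>+ m. \<integral>\<^sup>+ y. ennreal (gg (m, y)) * indicator E (m, y) \<partial>PY \<partial>PM)"
    by (rule PY.nn_integral_fst[symmetric]) (rule gm)
  also have "\<dots> = (\<Sum>m\<in>bitstrings k. \<integral>\<^sup>+ y. ennreal (gg (m, y)) * indicator E (m, y) \<partial>PY) * ennreal (1 / 2^k)"
    by (rule nn_PM)
  also have "(\<Sum>m\<in>bitstrings k. \<integral>\<^sup>+ y. ennreal (gg (m, y)) * indicator E (m, y) \<partial>PY) =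
      (\<Sum>m\<in>bitstrings k. (\<Sum>s\<in>S. ennreal (2^k) * (\<Sum>x\<in>X. if f s x = m then I s x m else 0)) * ennreal cc)"
  proof (intro sum.cong refl)
    fix m
    have mp: "Pair m \<in> measurable TT (CM \<Otimes>\<^sub>M TT)" by (rule measurable_Pair1') (simp add: CM_def)
    have "(\<lambda>y. ennreal (gg y) * indicator E y) \<in> borel_measurable (CM \<Otimes>\<^sub>M TT)" by measurable
    from measurable_compose[OF mp this]
    have Hm[measurable]: "(\<lambda>y. ennreal (gg (m, y)) * indicator E (m, y)) \<in> borel_measurable TT" by simp
    have "(\<integral>\<^sup>+ y. ennreal (gg (m, y)) * indicator E (m, y) \<partial>PY) =
        (\<Sum>s\<in>S. \<integral>\<^sup>+ z. ennreal (\<sigma> z) * (ennreal (gg (m, z, s)) * indicator E (m, z, s)) \<partial>\<mu>) * ennreal cc"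
      by (rule nn_PY[OF Hm])
    also have "(\<Sum>s\<in>S. \<integral>\<^sup>+ z. ennreal (\<sigma> z) * (ennreal (gg (m, z, s)) * indicator E (m, z, s)) \<partial>\<mu>) =
        (\<Sum>s\<in>S. ennreal (2^k) * (\<Sum>x\<in>X. if f s x = m then I s x m else 0))"
    proof (intro sum.cong refl)
      fix s
      have m2: "(\<lambda>z. (z, s)) \<in> measurable \<mu> TT" unfolding TT_def by (rule measurable_Pair2') simp
      have m3: "(\<lambda>z. (m, z, s)) \<in> measurable \<mu> (CM \<Otimes>\<^sub>M TT)"
        by (rule measurable_compose[OF m2 measurable_Pair1']) (simp add: CM_def)
      have Ez[measurable]: "(\<lambda>z. indicator E (m, z, s) :: ennreal) \<in> borel_measurable \<mu>"
        by (rule measurable_compose[OF m3]) simp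
      have pt: "ennreal (\<sigma> z) * (ennreal (gg (m, z, s)) * indicator E (m, z, s)) =
          ennreal (2^k) * (\<Sum>x\<in>X. (if f s x = m then ennreal (\<omega> x z) * indicator E (m, z, s) else 0))" for z
      proof -
        have "ennreal (\<sigma> z) * ennreal (gg (m, z, s)) = ennreal (2^k) * ennreal (FF s m z)"
          using \<sigma>_gg[of z m s] \<sigma>_nonneg gg_nonneg FF_nonneg by (simp add: ennreal_mult[symmetric])
        moreover have "ennreal (FF s m z) = (\<Sum>x\<in>X. (if f s x = m then ennreal (\<omega> x z) else 0))"
        proof -
          have "ennreal (FF s m z) = (\<Sum>x\<in>X. ennreal (if f s x = m then w x z else 0))"
            unfolding FF_def by (rule sum_ennreal[symmetric]) (simp add: w_nonneg)
          also have "\<dots> = (\<Sum>x\<in>X. (if f s x = m then ennreal (\<omega> x z) else 0))"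
            by (intro sum.cong refl) (simp add: ennreal_w)
          finally show ?thesis .
        qed
        moreover have "(\<Sum>x\<in>X. if f s x = m then ennreal (\<omega> x z) else 0) * indicator E (m,z,s) = (\<Sum>x\<in>X. (if f s x = m then ennreal (\<omega> x z) * indicator E (m, z, s) else 0))"
          by (subst sum_distrib_right) (intro sum.cong refl; simp)
        ultimately show ?thesis
          by (simp add: mult.assoc[symmetric]) (simp add: mult.assoc)
      qed
      have "(\<integral>\<^sup>+ z. ennreal (\<sigma> z) * (ennreal (gg (m, z, s)) * indicator E (m, z, s)) \<partial>\<mu>) =
          ennreal (2^k) * (\<integral>\<^sup>+ z. (\<Sum>x\<in>X. (if f s x = m then ennreal (\<omega> x z) * indicator E (m, z, s) else 0)) \<partial>\<mu>)"
        unfolding pt by (rule nn_integral_cmult) (use \<omega>_meas in measurable)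
      also have "(\<integral>\<^sup>+ z. (\<Sum>x\<in>X. (if f s x = m then ennreal (\<omega> x z) * indicator E (m, z, s) else 0)) \<partial>\<mu>) =
          (\<Sum>x\<in>X. \<integral>\<^sup>+ z. (if f s x = m then ennreal (\<omega> x z) * indicator E (m, z, s) else 0) \<partial>\<mu>)"
        by (rule nn_integral_sum) (use \<omega>_meas in measurable)
      also have "\<dots> = (\<Sum>x\<in>X. if f s x = m then I s x m else 0)"
        by (intro sum.cong refl) (simp add: I_def)
      finally show "(\<integral>\<^sup>+ z. ennreal (\<sigma> z) * (ennreal (gg (m, z, s)) * indicator E (m, z, s)) \<partial>\<mu>) =
          ennreal (2^k) * (\<Sum>x\<in>X. if f s x = m then I s x m else 0)" .
    qed
    finally show "(\<integral>\<^sup>+ y. ennreal (gg (m, y)) * indicator E (m, y) \<partial>PY) =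
        (\<Sum>s\<in>S. ennreal (2^k) * (\<Sum>x\<in>X. if f s x = m then I s x m else 0)) * ennreal cc" .
  qed
  also have "\<dots> = ennreal (2^k) * (\<Sum>s\<in>S. \<Sum>x\<in>X. \<Sum>m\<in>bitstrings k. if f s x = m then I s x m else 0) * ennreal cc"
    by (simp add: sum_distrib_left sum_distrib_right mult_ac sum.swap[of _ "bitstrings k"])
  also have "(\<Sum>s\<in>S. \<Sum>x\<in>X. \<Sum>m\<in>bitstrings k. if f s x = m then I s x m else 0) = (\<Sum>s\<in>S. \<Sum>x\<in>X. I s x (f s x))"
    by (intro sum.cong refl) (simp add: sum.delta' finite_bitstrings f_range)
  finally have rhs: "emeasure (density (PM \<Otimes>\<^sub>M PY) (\<lambda>y. ennreal (gg y))) E =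
      ennreal (2^k) * (\<Sum>s\<in>S. \<Sum>x\<in>X. I s x (f s x)) * ennreal cc * ennreal (1 / 2^k)" .
  have "ennreal (2^k) * ennreal (1 / 2^k) = 1" by (simp add: ennreal_mult[symmetric])
  then have "rhs' = (\<Sum>s\<in>S. \<Sum>x\<in>X. I s x (f s x)) * ennreal cc" if "rhs' = ennreal (2^k) * (\<Sum>s\<in>S. \<Sum>x\<in>X. I s x (f s x)) * ennreal cc * ennreal (1 / 2^k)" for rhs'
    using that by (metis (no_types, lifting) mult.assoc mult.commute mult_1)
  from this[OF rhs] lhs show "emeasure QQ E = emeasure (density (PM \<Otimes>\<^sub>M PY) (\<lambda>y. ennreal (gg y))) E"
    by simp
qed


lemma MI_eq: "prob_space.mutual_information J 2 (count_space UNIV) (\<mu> \<Otimes>\<^sub>M count_space UNIV)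
    (\<lambda>\<xi>. fst (fst \<xi>)) (\<lambda>\<xi>. (snd \<xi>, fst (snd (fst \<xi>)))) = (\<integral> \<xi>. log 2 (gg (Xv \<xi>, Yv \<xi>)) \<partial>J)"
proof -
  have xv: "(\<lambda>\<xi>. fst (fst \<xi>)) = Xv" by (simp add: fun_eq_iff Xv_def)
  have yv: "(\<lambda>\<xi>. (snd \<xi>, fst (snd (fst \<xi>)))) = Yv" by (simp add: fun_eq_iff Yv_def)
  have sf: "sigma_finite_measure (PM \<Otimes>\<^sub>M PY)"
    using prob_space_pair[OF prob_PM prob_PY] by (simp add: prob_space_imp_sigma_finite)
  have gP[measurable]: "gg \<in> borel_measurable (PM \<Otimes>\<^sub>M PY)"
    by (simp cong: measurable_cong_sets[OF sets_P refl])
  have "prob_space.mutual_information J 2 (count_space UNIV) (\<mu> \<Otimes>\<^sub>M count_space UNIV)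
    (\<lambda>\<xi>. fst (fst \<xi>)) (\<lambda>\<xi>. (snd \<xi>, fst (snd (fst \<xi>)))) = KL_divergence 2 (PM \<Otimes>\<^sub>M PY) QQ"
    unfolding prob_space.mutual_information_def[OF prob_J] xv yv
    by (simp add: PM_def PY_def QQ_def CM_def TT_def)
  also have "\<dots> = (\<integral> y. gg y * log 2 (gg y) \<partial>(PM \<Otimes>\<^sub>M PY))"
    unfolding QQ_density
    by (rule sigma_finite_measure.KL_density[OF sf]) (simp_all add: gg_nonneg)
  also have "\<dots> = (\<integral> y. log 2 (gg y) \<partial>density (PM \<Otimes>\<^sub>M PY) (\<lambda>y. ennreal (gg y)))"
    by (subst integral_density) (simp_all add: gg_nonneg)
  also have "\<dots> = (\<integral> y. log 2 (gg y) \<partial>QQ)" by (simp add: QQ_density)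
  also have "\<dots> = (\<integral> \<xi>. log 2 (gg (Xv \<xi>, Yv \<xi>)) \<partial>J)"
    unfolding QQ_def by (rule integral_distr) measurable
  finally show ?thesis .
qed


lemma coll_card: "x \<in> X \<Longrightarrow> x' \<in> X \<Longrightarrow> x' \<noteq> x \<Longrightarrow> real (card {s\<in>S. f s x' = f s x}) \<le> real (card S) / 2^k"
proof -
  assume a: "x \<in> X" "x' \<in> X" "x' \<noteq> x"
  have "real (card {s\<in>S. f s x' = f s x}) / real (card S) \<le> 2 powr (- real k)"
    using uhf a unfolding is_UHF_def by blast
  moreover have "(2::real) powr (- real k) = 1 / 2^k" by (simp add: powr_minus powr_realpow divide_inverse)
  moreover have "real (card S) > 0" using S_fin S_ne by (simp add: card_gt_0_iff)
  ultimately show ?thesis by (simp add: divide_le_eq field_simps)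
qed

lemma collision:
  assumes x: "x \<in> X"
  shows "(\<Sum>s\<in>S. FF s (f s x) z) \<le> real (card S) * w x z + real (card S) / 2^k * \<sigma> z"
proof -
  have "(\<Sum>s\<in>S. FF s (f s x) z) = (\<Sum>x'\<in>X. \<Sum>s\<in>S. if f s x' = f s x then w x' z else 0)"
    unfolding FF_def by (rule sum.swap)
  also have "\<dots> = (\<Sum>x'\<in>X. real (card {s\<in>S. f s x' = f s x}) * w x' z)"
    by (intro sum.cong refl) (simp add: sum.inter_filter[symmetric] S_fin)
  also have "\<dots> = real (card {s\<in>S. f s x = f s x}) * w x z + (\<Sum>x'\<in>X - {x}. real (card {s\<in>S. f s x' = f s x}) * w x' z)"
    using x X_fin by (simp add: sum.remove)
  also have "real (card {s\<in>S. f s x = f s x}) = real (card S)" by simp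
  also have "(\<Sum>x'\<in>X - {x}. real (card {s\<in>S. f s x' = f s x}) * w x' z) \<le> (\<Sum>x'\<in>X - {x}. real (card S) / 2^k * w x' z)"
    by (intro sum_mono mult_right_mono coll_card) (auto simp: x w_nonneg)
  also have "\<dots> \<le> (\<Sum>x'\<in>X. real (card S) / 2^k * w x' z)"
    by (rule sum_mono2) (auto simp: X_fin w_nonneg)
  also have "\<dots> = real (card S) / 2^k * \<sigma> z" by (simp add: \<sigma>_def sum_distrib_left)
  finally show ?thesis by simp
qed

lemma pointwise_main:
  fixes a :: "'x \<Rightarrow> real" and Mx :: real
  assumes z: "z \<in> space \<mu>" and a: "\<And>x. x \<in> X \<Longrightarrow> 0 \<le> a x" "\<And>x. x \<in> X \<Longrightarrow> a x \<le> \<omega> x z"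
    and Mx: "\<And>x. x \<in> X \<Longrightarrow> a x \<le> Mx" "0 \<le> Mx"
  shows "(\<Sum>s\<in>S. \<Sum>x\<in>X. a x * gg (f s x, z, s)) \<le> real (card S) * (\<Sum>x\<in>X. a x) + 2^k * real (card S) * Mx"
proof (cases "\<sigma> z > 0")
  case False
  then have "\<sigma> z = 0" using \<sigma>_nonneg[of z] by simp
  then have "\<forall>x\<in>X. w x z = 0" unfolding \<sigma>_def using sum_nonneg_eq_0_iff[OF X_fin, of "\<lambda>x. w x z"] w_nonneg by auto
  then have "\<forall>x\<in>X. a x = 0"
  proof (intro ballI)
    fix x assume x: "x \<in> X" and h: "\<forall>x\<in>X. w x z = 0"
    have "\<omega> x z = 0" using h x \<omega>_nonneg[OF x z] by (auto simp: w_def max_def split: if_splits)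
    then show "a x = 0" using a(1)[OF x] a(2)[OF x] by simp
  qed
  then show ?thesis using Mx S_fin by simp
next
  case True
  have "(\<Sum>s\<in>S. \<Sum>x\<in>X. a x * gg (f s x, z, s)) = (\<Sum>x\<in>X. a x * (2^k / \<sigma> z) * (\<Sum>s\<in>S. FF s (f s x) z))"
    by (subst sum.swap) (simp add: gg_def True sum_distrib_left mult_ac sum_divide_distrib)
  also have "\<dots> \<le> (\<Sum>x\<in>X. a x * (2^k / \<sigma> z) * (real (card S) * w x z + real (card S) / 2^k * \<sigma> z))"
    using True by (intro sum_mono mult_left_mono collision) (auto simp: a)
  also have "\<dots> = (\<Sum>x\<in>X. real (card S) * a x + 2^k * real (card S) / \<sigma> z * (a x * w x z))"
    using True by (intro sum.cong refl) (simp add: field_simps)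
  also have "\<dots> = real (card S) * (\<Sum>x\<in>X. a x) + 2^k * real (card S) / \<sigma> z * (\<Sum>x\<in>X. a x * w x z)"
    by (simp add: sum.distrib sum_distrib_left)
  also have "2^k * real (card S) / \<sigma> z * (\<Sum>x\<in>X. a x * w x z) \<le> 2^k * real (card S) / \<sigma> z * (Mx * \<sigma> z)"
  proof (rule mult_left_mono)
    have "(\<Sum>x\<in>X. a x * w x z) \<le> (\<Sum>x\<in>X. Mx * w x z)"
      by (intro sum_mono mult_right_mono) (auto simp: Mx w_nonneg)
    also have "(\<Sum>x\<in>X. Mx * w x z) = Mx * \<sigma> z" by (simp add: \<sigma>_def sum_distrib_left)
    finally show "(\<Sum>x\<in>X. a x * w x z) \<le> Mx * \<sigma> z" .
  qed (use True in simp)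
  also have "2^k * real (card S) / \<sigma> z * (Mx * \<sigma> z) = 2^k * real (card S) * Mx" using True by simp
  finally show ?thesis by simp
qed


lemma gg_pos: "x \<in> X \<Longrightarrow> 0 < \<omega> x z \<Longrightarrow> 0 < gg (f s x, z, s)"
proof -
  assume x: "x \<in> X" and p: "0 < \<omega> x z"
  have wx: "w x z = \<omega> x z" using p by (simp add: w_def)
  have "w x z \<le> \<sigma> z" unfolding \<sigma>_def by (rule member_le_sum) (auto simp: x X_fin w_nonneg)
  then have sp: "\<sigma> z > 0" using p wx by simp
  have "(if f s x = f s x then w x z else 0) \<le> FF s (f s x) z" unfolding FF_def
    by (rule member_le_sum[where f="\<lambda>x'. if f s x' = f s x then w x' z else 0"]) (auto simp: x X_fin w_nonneg)
  then have "FF s (f s x) z > 0" using p wx by simp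
  then show ?thesis using sp by (simp add: gg_def)
qed

lemma gg_z_meas[measurable]: "(\<lambda>z. gg (m, z, s)) \<in> borel_measurable \<mu>"
proof -
  have m2: "(\<lambda>z. (z, s)) \<in> measurable \<mu> TT" unfolding TT_def by (rule measurable_Pair2') simp
  have m3: "(\<lambda>z. (m, z, s)) \<in> measurable \<mu> (CM \<Otimes>\<^sub>M TT)"
    by (rule measurable_compose[OF m2 measurable_Pair1']) (simp add: CM_def)
  show ?thesis by (rule measurable_compose[OF m3 gg_meas])
qed

lemma G_J[measurable]: "(\<lambda>\<xi>. gg (Xv \<xi>, Yv \<xi>)) \<in> borel_measurable J" by measurable
lemma G_NN[measurable]: "(\<lambda>\<xi>. gg (Xv \<xi>, Yv \<xi>)) \<in> borel_measurable NN" by measurable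

lemma T_sets:
  assumes T: "T \<in> sets (count_space X \<Otimes>\<^sub>M \<mu>)"
  shows "T \<in> sets (count_space UNIV \<Otimes>\<^sub>M \<mu>)"
proof -
  have sub: "T \<subseteq> X \<times> space \<mu>" using sets.sets_into_space[OF T] by (simp add: space_pair_measure)
  have "T = (\<Union>x\<in>X. {x} \<times> (Pair x -` T))" using sub by auto
  moreover have "(\<Union>x\<in>X. {x} \<times> (Pair x -` T)) \<in> sets (count_space UNIV \<Otimes>\<^sub>M \<mu>)"
    using X_fin by (intro sets.finite_UN pair_measureI) (auto intro: sets_Pair1[OF T])
  ultimately show ?thesis by simp
qed

lemma Tind_NN:
  assumes T: "T \<in> sets (count_space X \<Otimes>\<^sub>M \<mu>)"
  shows "(\<lambda>\<xi>::(bool list \<times> 's \<times> 'x) \<times> 'z. indicator T (snd (snd (fst \<xi>)), snd \<xi>) :: real) \<in> borel_measurable NN"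
proof -
  have m1: "(\<lambda>\<xi>::(bool list \<times> 's \<times> 'x) \<times> 'z. snd (snd (fst \<xi>))) \<in> measurable NN (count_space UNIV)"
    unfolding NN_def by (rule measurable_compose[OF measurable_fst]) simp
  have "(\<lambda>\<xi>::(bool list \<times> 's \<times> 'x) \<times> 'z. (snd (snd (fst \<xi>)), snd \<xi>)) \<in> measurable NN (count_space UNIV \<Otimes>\<^sub>M \<mu>)"
    using m1 unfolding NN_def by measurable
  from measurable_compose[OF this borel_measurable_indicator[OF T_sets[OF T]]] show ?thesis .
qed

lemma Tind_z:
  assumes T: "T \<in> sets (count_space X \<Otimes>\<^sub>M \<mu>)"
  shows "(\<lambda>z. indicator T (x, z) :: real) \<in> borel_measurable \<mu>"
proof -
  have "Pair x \<in> measurable \<mu> (count_space UNIV \<Otimes>\<^sub>M \<mu>)" by (rule measurable_Pair1') simp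
  from measurable_compose[OF this borel_measurable_indicator[OF T_sets[OF T]]] show ?thesis .
qed


lemma bound_T:
  fixes T :: "('x \<times> 'z) set" and \<epsilon> :: real
  assumes T: "T \<in> sets (count_space X \<Otimes>\<^sub>M \<mu>)"
    and adm: "\<And>x. x \<in> X \<Longrightarrow> emeasure (density \<mu> (\<lambda>z. ennreal (\<omega> x z))) {z \<in> space \<mu>. (x, z) \<in> T} \<ge> ennreal (1 - \<epsilon>)"
    and \<epsilon>0: "0 \<le> \<epsilon>"
    and Lfin: "(\<integral>\<^sup>+ z. Max ((\<lambda>x. ennreal (restrict_density T \<omega> x z)) ` X) \<partial>\<mu>) \<noteq> \<infinity>"
  shows "(\<integral> \<xi>. log 2 (gg (Xv \<xi>, Yv \<xi>)) \<partial>J) \<le> 1 / ln 2 * (2 powr (- real b) * enn2real (\<integral>\<^sup>+ z. Max ((\<lambda>x. ennreal (restrict_density T \<omega> x z)) ` X) \<partial>\<mu>)) + \<epsilon> * real k"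
proof -
  define L where "L = (\<integral>\<^sup>+ z. Max ((\<lambda>x. ennreal (restrict_density T \<omega> x z)) ` X) \<partial>\<mu>)"
  define Tind where "Tind \<xi> = (indicator T (snd (snd (fst \<xi>)), snd \<xi>) :: real)" for \<xi> :: "(bool list \<times> 's \<times> 'x) \<times> 'z"
  define G where "G \<xi> = gg (Xv \<xi>, Yv \<xi>)" for \<xi>
  define R where "R \<xi> = 1/ln 2 * (Tind \<xi> * G \<xi>) - 1/ln 2 * Tind \<xi> + real k - real k * Tind \<xi>" for \<xi>
  define \<beta> where "\<beta> x = (\<integral>\<^sup>+ z. ennreal (\<omega> x z * indicator T (x, z)) \<partial>\<mu>)" for x
  interpret J: prob_space J by (rule prob_J)
  have TiNN[measurable]: "Tind \<in> borel_measurable NN" unfolding Tind_def[abs_def] by (rule Tind_NN[OF T])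
  have TiJ[measurable]: "Tind \<in> borel_measurable J" using TiNN by (simp cong: measurable_cong_sets[OF sets_J refl])
  have GNN[measurable]: "G \<in> borel_measurable NN" unfolding G_def[abs_def] by (rule G_NN)
  have GJ[measurable]: "G \<in> borel_measurable J" unfolding G_def[abs_def] by (rule G_J)
  have Tz[measurable]: "(\<lambda>z. indicator T (x, z) :: real) \<in> borel_measurable \<mu>" for x by (rule Tind_z[OF T])
  have T0n: "0 \<le> Tind \<xi>" for \<xi> by (simp add: Tind_def)
  have T01: "Tind \<xi> = 0 \<or> Tind \<xi> = 1" for \<xi> by (simp add: Tind_def indicator_def)
  have G0: "0 \<le> G \<xi>" and G2: "G \<xi> \<le> 2^k" for \<xi> by (simp_all add: G_def gg_nonneg gg_le)
  have sub: "T \<subseteq> X \<times> space \<mu>" using sets.sets_into_space[OF T] by (simp add: space_pair_measure)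

  have AEpos: "AE \<xi> in J. 0 < G \<xi>"
  proof (rule AE_I')
    define N where "N = {\<xi> \<in> space NN. G \<xi> \<le> 0}"
    have Ns[measurable]: "N \<in> sets NN" unfolding N_def by measurable
    have "emeasure J N = (\<integral>\<^sup>+ \<xi>. indicator N \<xi> \<partial>J)"
      by (rule nn_integral_indicator[symmetric]) (simp add: sets_J)
    also have "\<dots> = (\<Sum>s\<in>S. \<Sum>x\<in>X. \<integral>\<^sup>+ z. ennreal (\<omega> x z) * indicator N ((f s x, s, x), z) \<partial>\<mu>) * ennreal cc"
      by (rule nnJ) measurable
    also have "(\<Sum>s\<in>S. \<Sum>x\<in>X. \<integral>\<^sup>+ z. ennreal (\<omega> x z) * indicator N ((f s x, s, x), z) \<partial>\<mu>) = 0"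
    proof (intro sum.neutral ballI)
      fix s x assume x: "x \<in> X"
      show "(\<integral>\<^sup>+ z. ennreal (\<omega> x z) * indicator N ((f s x, s, x), z) \<partial>\<mu>) = 0"
      proof (rule nn_integral_zero')
        show "AE z in \<mu>. ennreal (\<omega> x z) * indicator N ((f s x, s, x), z) = 0"
        proof (rule AE_I2)
          fix z assume z: "z \<in> space \<mu>"
          show "ennreal (\<omega> x z) * indicator N ((f s x, s, x), z) = 0"
          proof (cases "0 < \<omega> x z")
            case True
            then have "0 < G ((f s x, s, x), z)" using gg_pos[OF x True, of s] by (simp add: G_def Xv_def Yv_def)
            then have "((f s x, s, x), z) \<notin> N" by (simp add: N_def)
            then show ?thesis by simp
          next
            case False then show ?thesis by (simp add: ennreal_neg)
          qed
        qed
      qed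
    qed
    finally show "N \<in> null_sets J" using Ns by (simp add: null_sets_def sets_J)
    show "{\<xi> \<in> space J. \<not> 0 < G \<xi>} \<subseteq> N" by (auto simp: N_def space_J)
  qed

  have logle: "log 2 (G \<xi>) \<le> R \<xi>" if "0 < G \<xi>" for \<xi>
  proof -
    have "log 2 (G \<xi>) \<le> Tind \<xi> * ((G \<xi> - 1) / ln 2) + (1 - Tind \<xi>) * real k"
    proof (cases "Tind \<xi> = 1")
      case True
      have "ln (G \<xi>) \<le> G \<xi> - 1" by (rule ln_le_minus_one[OF that])
      then have "ln (G \<xi>) / ln 2 \<le> (G \<xi> - 1) / ln 2" by (rule divide_right_mono) simp
      then show ?thesis using True by (simp add: log_def)
    next
      case False then have T0: "Tind \<xi> = 0" using T01 by blast
      have "log 2 (G \<xi>) \<le> log 2 (2^k)" using that G2 by (subst log_le_cancel_iff) auto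
      also have "\<dots> = real k" by (simp add: log_nat_power)
      finally show ?thesis using T0 by simp
    qed
    also have "\<dots> = R \<xi>" by (simp add: R_def algebra_simps diff_divide_distrib)
    finally show ?thesis .
  qed
  have iTG: "integrable J (\<lambda>\<xi>. Tind \<xi> * G \<xi>)"
  proof (rule J.integrable_const_bound[where B="2^k"])
    show "AE \<xi> in J. norm (Tind \<xi> * G \<xi>) \<le> 2^k"
    proof (rule AE_I2)
      fix \<xi> show "norm (Tind \<xi> * G \<xi>) \<le> 2^k" using T01[of \<xi>] G0[of \<xi>] G2[of \<xi>] by auto
    qed
  qed measurable
  have iT: "integrable J Tind"
  proof (rule J.integrable_const_bound[where B="1"])
    show "AE \<xi> in J. norm (Tind \<xi>) \<le> 1"
    proof (rule AE_I2)
      fix \<xi> show "norm (Tind \<xi>) \<le> 1" using T01[of \<xi>] by auto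
    qed
  qed measurable
  have iR: "integrable J R" unfolding R_def[abs_def]
    by (intro Bochner_Integration.integrable_diff Bochner_Integration.integrable_add integrable_mult_right iTG iT J.integrable_const)
  have intR: "(\<integral>\<xi>. R \<xi> \<partial>J) = 1/ln 2 * (\<integral>\<xi>. Tind \<xi> * G \<xi> \<partial>J) - 1/ln 2 * (\<integral>\<xi>. Tind \<xi> \<partial>J) + real k - real k * (\<integral>\<xi>. Tind \<xi> \<partial>J)"
    unfolding R_def[abs_def]
    by (simp add: iTG iT J.integrable_const Bochner_Integration.integral_diff Bochner_Integration.integral_add J.prob_space)
  have main1: "(\<integral>\<xi>. log 2 (G \<xi>) \<partial>J) \<le> (\<integral>\<xi>. R \<xi> \<partial>J) \<or> (\<integral>\<xi>. log 2 (G \<xi>) \<partial>J) = 0"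
  proof (cases "integrable J (\<lambda>\<xi>. log 2 (G \<xi>))")
    case True
    have ae: "AE \<xi> in J. log 2 (G \<xi>) \<le> R \<xi>" using AEpos by eventually_elim (simp add: logle)
    have "(\<integral>\<xi>. log 2 (G \<xi>) \<partial>J) \<le> (\<integral>\<xi>. R \<xi> \<partial>J)"
      by (rule integral_mono_AE[OF True iR ae])
    then show ?thesis ..
  next
    case False then show ?thesis by (simp add: not_integrable_integral_eq)
  qed

  have TGnn: "(\<integral>\<xi>. Tind \<xi> * G \<xi> \<partial>J) = enn2real ((\<Sum>s\<in>S. \<Sum>x\<in>X. \<integral>\<^sup>+ z. ennreal (\<omega> x z) * ennreal (indicator T (x, z) * gg (f s x, z, s)) \<partial>\<mu>) * ennreal cc)"
  proof -
    have "(\<integral>\<xi>. Tind \<xi> * G \<xi> \<partial>J) = enn2real (\<integral>\<^sup>+ \<xi>. ennreal (Tind \<xi> * G \<xi>) \<partial>J)"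
      by (rule integral_eq_nn_integral) (measurable, use G0 T0n in \<open>auto intro!: AE_I2\<close>)
    also have "(\<integral>\<^sup>+ \<xi>. ennreal (Tind \<xi> * G \<xi>) \<partial>J) = (\<Sum>s\<in>S. \<Sum>x\<in>X. \<integral>\<^sup>+ z. ennreal (\<omega> x z) * ennreal (indicator T (x, z) * gg (f s x, z, s)) \<partial>\<mu>) * ennreal cc"
      by (subst nnJ) (measurable, simp add: Tind_def G_def Xv_def Yv_def)
    finally show ?thesis .
  qed
  have Tnn: "(\<integral>\<xi>. Tind \<xi> \<partial>J) = enn2real ((\<Sum>s\<in>S. \<Sum>x\<in>X. \<beta> x) * ennreal cc)"
  proof -
    have "(\<integral>\<xi>. Tind \<xi> \<partial>J) = enn2real (\<integral>\<^sup>+ \<xi>. ennreal (Tind \<xi>) \<partial>J)"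
      by (rule integral_eq_nn_integral) (measurable, use T0n in \<open>auto intro!: AE_I2\<close>)
    also have "(\<integral>\<^sup>+ \<xi>. ennreal (Tind \<xi>) \<partial>J) = (\<Sum>s\<in>S. \<Sum>x\<in>X. \<beta> x) * ennreal cc"
      by (subst nnJ) (measurable, simp add: Tind_def \<beta>_def ennreal_mult'')
    finally show ?thesis .
  qed
  have \<beta>ge: "ennreal (1 - \<epsilon>) \<le> \<beta> x" if x: "x \<in> X" for x
  proof -
    have [measurable]: "\<omega> x \<in> borel_measurable \<mu>" using \<omega>_meas[OF x] .
    have se: "{z \<in> space \<mu>. (x, z) \<in> T} = Pair x -` T \<inter> space \<mu>" by auto
    have ss: "{z \<in> space \<mu>. (x, z) \<in> T} \<in> sets \<mu>" unfolding se using sets_Pair1[OF T] by auto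
    have "emeasure (density \<mu> (\<lambda>z. ennreal (\<omega> x z))) {z \<in> space \<mu>. (x, z) \<in> T} = (\<integral>\<^sup>+ z. ennreal (\<omega> x z) * indicator {z \<in> space \<mu>. (x, z) \<in> T} z \<partial>\<mu>)"
      by (rule emeasure_density[OF _ ss]) measurable
    also have "\<dots> = \<beta> x" unfolding \<beta>_def
      by (rule nn_integral_cong) (simp add: ennreal_mult'' indicator_def)
    finally show ?thesis using adm[OF x] by simp
  qed
  have \<beta>le: "\<beta> x \<le> 1" if x: "x \<in> X" for x
  proof -
    have "\<beta> x \<le> (\<integral>\<^sup>+ z. ennreal (\<omega> x z) \<partial>\<mu>)" unfolding \<beta>_def
      by (rule nn_integral_mono) (use \<omega>_nonneg[OF x] in \<open>auto simp: indicator_def\<close>)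
    then show ?thesis using \<omega>_prob[OF x] by simp
  qed

  have rd: "restrict_density T \<omega> x z = \<omega> x z * indicator T (x, z)" for x z
    by (simp add: restrict_density_def indicator_def)
  have Lm[measurable]: "(\<lambda>z. Max ((\<lambda>x. ennreal (restrict_density T \<omega> x z)) ` X)) \<in> borel_measurable \<mu>"
    unfolding rd by (rule borel_measurable_Max[OF X_fin]) (use \<omega>_meas in measurable)
  have keyE: "(\<Sum>s\<in>S. \<Sum>x\<in>X. \<integral>\<^sup>+ z. ennreal (\<omega> x z) * ennreal (indicator T (x, z) * gg (f s x, z, s)) \<partial>\<mu>)
      \<le> of_nat (card S) * (\<Sum>x\<in>X. \<beta> x) + ennreal (2^k * real (card S)) * L"
  proof -
    have mi[measurable]: "(\<lambda>z. ennreal (\<omega> x z) * ennreal (indicator T (x, z) * gg (f s x, z, s))) \<in> borel_measurable \<mu>"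
      if "x \<in> X" for x s using \<omega>_meas[OF that] by measurable
    have mb[measurable]: "(\<lambda>z. ennreal (\<omega> x z * indicator T (x, z))) \<in> borel_measurable \<mu>"
      if "x \<in> X" for x using \<omega>_meas[OF that] by measurable
    have "(\<Sum>s\<in>S. \<Sum>x\<in>X. \<integral>\<^sup>+ z. ennreal (\<omega> x z) * ennreal (indicator T (x, z) * gg (f s x, z, s)) \<partial>\<mu>)
        = (\<Sum>s\<in>S. \<integral>\<^sup>+ z. (\<Sum>x\<in>X. ennreal (\<omega> x z) * ennreal (indicator T (x, z) * gg (f s x, z, s))) \<partial>\<mu>)"
      by (intro sum.cong refl nn_integral_sum[symmetric]) (rule mi)
    also have "\<dots> = (\<integral>\<^sup>+ z. (\<Sum>s\<in>S. \<Sum>x\<in>X. ennreal (\<omega> x z) * ennreal (indicator T (x, z) * gg (f s x, z, s))) \<partial>\<mu>)"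
      by (rule nn_integral_sum[symmetric]) (intro borel_measurable_sum mi)
    also have "\<dots> \<le> (\<integral>\<^sup>+ z. of_nat (card S) * (\<Sum>x\<in>X. ennreal (\<omega> x z * indicator T (x, z))) + ennreal (2^k * real (card S)) * Max ((\<lambda>x. ennreal (restrict_density T \<omega> x z)) ` X) \<partial>\<mu>)"
    proof (rule nn_integral_mono)
      fix z assume z: "z \<in> space \<mu>"
      define a where "a x = restrict_density T \<omega> x z" for x
      define Mx where "Mx = Max (a ` X)"
      have a0: "0 \<le> a x" if "x \<in> X" for x using \<omega>_nonneg[OF that z] by (simp add: a_def rd)
      have aw: "a x \<le> \<omega> x z" if "x \<in> X" for x using \<omega>_nonneg[OF that z] by (simp add: a_def rd indicator_def)
      have aM: "a x \<le> Mx" if "x \<in> X" for x unfolding Mx_def using that X_fin by (intro Max_ge) auto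
      have M0: "0 \<le> Mx" using aM[OF x0] a0[OF x0] by simp
      have "(\<Sum>s\<in>S. \<Sum>x\<in>X. ennreal (\<omega> x z) * ennreal (indicator T (x, z) * gg (f s x, z, s))) = (\<Sum>s\<in>S. \<Sum>x\<in>X. ennreal (a x * gg (f s x, z, s)))"
        by (intro sum.cong refl) (simp add: a_def rd ennreal_mult'[symmetric] \<omega>_nonneg[OF _ z] mult.assoc)
      also have "\<dots> = ennreal (\<Sum>s\<in>S. \<Sum>x\<in>X. a x * gg (f s x, z, s))"
        using a0 gg_nonneg by (simp add: sum_ennreal sum_nonneg)
      also have "\<dots> \<le> ennreal (real (card S) * (\<Sum>x\<in>X. a x) + 2^k * real (card S) * Mx)"
        by (rule ennreal_leI, rule pointwise_main[OF z a0 aw aM M0])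
      also have "\<dots> = of_nat (card S) * (\<Sum>x\<in>X. ennreal (a x)) + ennreal (2^k * real (card S)) * ennreal Mx"
        using a0 M0 by (simp add: ennreal_plus ennreal_mult sum_nonneg sum_ennreal ennreal_of_nat_eq_real_of_nat)
      also have "ennreal Mx = Max ((\<lambda>x. ennreal (restrict_density T \<omega> x z)) ` X)"
        unfolding Mx_def using X_fin X_ne by (subst mono_Max_commute[OF monotone_ennreal]) (auto simp: image_image a_def)
      finally show "(\<Sum>s\<in>S. \<Sum>x\<in>X. ennreal (\<omega> x z) * ennreal (indicator T (x, z) * gg (f s x, z, s))) \<le>
          of_nat (card S) * (\<Sum>x\<in>X. ennreal (\<omega> x z * indicator T (x, z))) + ennreal (2^k * real (card S)) * Max ((\<lambda>x. ennreal (restrict_density T \<omega> x z)) ` X)"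
        by (simp add: a_def rd)
    qed
    also have "\<dots> = of_nat (card S) * (\<Sum>x\<in>X. \<beta> x) + ennreal (2^k * real (card S)) * L"
      unfolding \<beta>_def L_def
      by (subst nn_integral_add) (auto intro!: borel_measurable_sum mb simp: nn_integral_cmult nn_integral_sum)
    finally show ?thesis .
  qed

  define br where "br x = enn2real (\<beta> x)" for x
  have \<beta>br: "\<beta> x = ennreal (br x)" if "x \<in> X" for x
  proof -
    have "\<beta> x \<noteq> \<top>" using \<beta>le[OF that] by (metis ennreal_one_neq_top top.extremum_unique)
    then show ?thesis unfolding br_def by (metis ennreal_enn2real less_top)
  qed
  have br0: "0 \<le> br x" for x by (simp add: br_def)
  have brge: "1 - \<epsilon> \<le> br x" if x: "x \<in> X" for x
  proof (cases "1 - \<epsilon> \<le> 0")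
    case True then show ?thesis using br0[of x] by linarith
  next
    case False
    have "enn2real (ennreal (1 - \<epsilon>)) \<le> enn2real (\<beta> x)"
      by (rule enn2real_mono[OF \<beta>ge[OF x]]) (simp add: \<beta>br[OF x])
    then show ?thesis using False by (simp add: br_def)
  qed
  define Lr where "Lr = enn2real L"
  have LLr: "L = ennreal Lr" using Lfin unfolding Lr_def L_def by (simp add: ennreal_enn2real_if)
  have Lr0: "0 \<le> Lr" by (simp add: Lr_def)
  have sumb: "(\<Sum>x\<in>X. \<beta> x) = ennreal (\<Sum>x\<in>X. br x)"
    by (simp add: \<beta>br sum_ennreal br0 cong: sum.cong)
  have cS: "real (card S) > 0" using S_fin S_ne by (simp add: card_gt_0_iff)
  define jr where "jr = real (card S) * (\<Sum>x\<in>X. br x) * cc"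
  have intT: "(\<integral>\<xi>. Tind \<xi> \<partial>J) = jr"
  proof -
    have "(\<Sum>s\<in>S. \<Sum>x\<in>X. \<beta> x) * ennreal cc = ennreal jr"
      unfolding jr_def using cc_nonneg br0
      by (simp add: sumb ennreal_of_nat_eq_real_of_nat ennreal_mult sum_nonneg)
    then show ?thesis using Tnn jr_def cc_nonneg br0 by (simp add: sum_nonneg)
  qed
  have intTG: "(\<integral>\<xi>. Tind \<xi> * G \<xi> \<partial>J) \<le> jr + 2^k * real (card S) * cc * Lr"
  proof -
    have "(of_nat (card S) * (\<Sum>x\<in>X. \<beta> x) + ennreal (2^k * real (card S)) * L) * ennreal cc
        = ennreal ((real (card S) * (\<Sum>x\<in>X. br x) + 2^k * real (card S) * Lr) * cc)"
      using cc_nonneg br0 Lr0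
      by (simp add: sumb LLr ennreal_of_nat_eq_real_of_nat ennreal_mult ennreal_plus sum_nonneg distrib_right)
    moreover have "(\<Sum>s\<in>S. \<Sum>x\<in>X. \<integral>\<^sup>+ z. ennreal (\<omega> x z) * ennreal (indicator T (x, z) * gg (f s x, z, s)) \<partial>\<mu>) * ennreal cc
        \<le> (of_nat (card S) * (\<Sum>x\<in>X. \<beta> x) + ennreal (2^k * real (card S)) * L) * ennreal cc"
      by (rule mult_right_mono[OF keyE]) simp
    ultimately have "(\<integral>\<xi>. Tind \<xi> * G \<xi> \<partial>J) \<le> enn2real (ennreal ((real (card S) * (\<Sum>x\<in>X. br x) + 2^k * real (card S) * Lr) * cc))"
      unfolding TGnn by (intro enn2real_mono) auto
    also have "\<dots> = (real (card S) * (\<Sum>x\<in>X. br x) + 2^k * real (card S) * Lr) * cc"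
      using cc_nonneg br0 Lr0 by (simp add: sum_nonneg)
    finally show ?thesis by (simp add: jr_def algebra_simps)
  qed
  have c1: "2^k * real (card S) * cc = 2 powr (- real b)"
    using cS by (simp add: cc_def power_add powr_minus powr_realpow divide_inverse) (simp add: field_simps)
  have c2: "real (card S) * cc * real (card X) = 1"
    using cS by (simp add: cc_def card_X)
  have jrge: "1 - \<epsilon> \<le> jr"
  proof -
    have "(\<Sum>x\<in>X. 1 - \<epsilon>) \<le> (\<Sum>x\<in>X. br x)" by (intro sum_mono brge)
    then have "real (card X) * (1 - \<epsilon>) \<le> (\<Sum>x\<in>X. br x)" by simp
    then have "real (card S) * cc * (real (card X) * (1 - \<epsilon>)) \<le> real (card S) * cc * (\<Sum>x\<in>X. br x)"
      using cS cc_nonneg by (intro mult_left_mono) auto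
    then show ?thesis using c2 by (simp add: jr_def mult_ac)
  qed
  have ln2: "ln (2::real) > 0" by simp
  have "(\<integral>\<xi>. R \<xi> \<partial>J) = 1/ln 2 * ((\<integral>\<xi>. Tind \<xi> * G \<xi> \<partial>J) - jr) + real k * (1 - jr)"
    using intR intT by (simp add: algebra_simps)
  also have "\<dots> \<le> 1/ln 2 * (2 powr (- real b) * Lr) + real k * \<epsilon>"
  proof (rule add_mono)
    show "1/ln 2 * ((\<integral>\<xi>. Tind \<xi> * G \<xi> \<partial>J) - jr) \<le> 1/ln 2 * (2 powr (- real b) * Lr)"
      using intTG c1 ln2 by (intro mult_left_mono) (auto simp: mult_ac)
    show "real k * (1 - jr) \<le> real k * \<epsilon>" using jrge by (intro mult_left_mono) auto
  qed
  finally have Rb: "(\<integral>\<xi>. R \<xi> \<partial>J) \<le> 1/ln 2 * (2 powr (- real b) * Lr) + \<epsilon> * real k" by (simp add: mult_ac)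
  have nnb: "0 \<le> 1/ln 2 * (2 powr (- real b) * Lr) + \<epsilon> * real k"
    using Lr0 \<epsilon>0 by simp
  from main1 Rb nnb have "(\<integral>\<xi>. log 2 (G \<xi>) \<partial>J) \<le> 1/ln 2 * (2 powr (- real b) * Lr) + \<epsilon> * real k" by auto
  then show ?thesis by (simp add: G_def Lr_def L_def)
qed


lemma Lf_ge:
  assumes T: "T \<in> sets (count_space X \<Otimes>\<^sub>M \<mu>)" and x: "x \<in> X"
  shows "emeasure (density \<mu> (\<lambda>z. ennreal (\<omega> x z))) {z \<in> space \<mu>. (x, z) \<in> T} \<le> (\<integral>\<^sup>+ z. Max ((\<lambda>x. ennreal (restrict_density T \<omega> x z)) ` X) \<partial>\<mu>)"
proof -
  have [measurable]: "\<omega> x \<in> borel_measurable \<mu>" using \<omega>_meas[OF x] .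
  have se: "{z \<in> space \<mu>. (x, z) \<in> T} = Pair x -` T \<inter> space \<mu>" by auto
  have ss: "{z \<in> space \<mu>. (x, z) \<in> T} \<in> sets \<mu>" unfolding se using sets_Pair1[OF T] by auto
  have "emeasure (density \<mu> (\<lambda>z. ennreal (\<omega> x z))) {z \<in> space \<mu>. (x, z) \<in> T} = (\<integral>\<^sup>+ z. ennreal (\<omega> x z) * indicator {z \<in> space \<mu>. (x, z) \<in> T} z \<partial>\<mu>)"
    by (rule emeasure_density[OF _ ss]) measurable
  also have "\<dots> \<le> (\<integral>\<^sup>+ z. Max ((\<lambda>x. ennreal (restrict_density T \<omega> x z)) ` X) \<partial>\<mu>)"
  proof (rule nn_integral_mono)
    fix z assume z: "z \<in> space \<mu>"
    have "ennreal (\<omega> x z) * indicator {z \<in> space \<mu>. (x, z) \<in> T} z = ennreal (restrict_density T \<omega> x z)"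
      using z by (simp add: restrict_density_def indicator_def)
    also have "\<dots> \<le> Max ((\<lambda>x. ennreal (restrict_density T \<omega> x z)) ` X)"
      using x X_fin by (intro Max_ge) auto
    finally show "ennreal (\<omega> x z) * indicator {z \<in> space \<mu>. (x, z) \<in> T} z \<le> Max ((\<lambda>x. ennreal (restrict_density T \<omega> x z)) ` X)" .
  qed
  finally show ?thesis .
qed

end

theorem lemma4:
  fixes X :: "'x set" and S :: "'s set" and k b :: nat
    and f :: "'s \<Rightarrow> 'x \<Rightarrow> bool list"
    and \<mu> :: "'z measure" and \<omega> :: "'x \<Rightarrow> 'z \<Rightarrow> real" and \<epsilon> :: real
  assumes X_fin: "finite X"
    and S_fin: "finite S" and S_ne: "S \<noteq> {}"
    and uhf: "is_UHF X S k f" and bal: "balanced X S k b f"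
    and \<omega>_meas: "\<And>x. x \<in> X \<Longrightarrow> \<omega> x \<in> borel_measurable \<mu>"
    and \<omega>_nonneg: "\<And>x z. x \<in> X \<Longrightarrow> z \<in> space \<mu> \<Longrightarrow> 0 \<le> \<omega> x z"
    and \<omega>_prob: "\<And>x. x \<in> X \<Longrightarrow> (\<integral>\<^sup>+ z. ennreal (\<omega> x z) \<partial>\<mu>) = 1"
    and \<epsilon>: "0 \<le> \<epsilon>" "\<epsilon> < 1"
  shows "ereal (prob_space.mutual_information (joint_MSXZ X S k f \<mu> \<omega>) 2
            (count_space UNIV) (\<mu> \<Otimes>\<^sub>M count_space UNIV)
            (\<lambda>\<xi>. fst (fst \<xi>)) (\<lambda>\<xi>. (snd \<xi>, fst (snd (fst \<xi>)))))
         \<le> ereal (1 / ln 2) * pow2e (- (ereal (real b) - Imax_smooth \<epsilon> \<mu> X \<omega>))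
           + ereal (\<epsilon> * real k)"
proof -
  interpret L4 X S k b f \<mu> \<omega>
    by unfold_locales (fact assms)+
  define MI where "MI = prob_space.mutual_information (joint_MSXZ X S k f \<mu> \<omega>) 2
            (count_space UNIV) (\<mu> \<Otimes>\<^sub>M count_space UNIV)
            (\<lambda>\<xi>. fst (fst \<xi>)) (\<lambda>\<xi>. (snd \<xi>, fst (snd (fst \<xi>))))"
  define Adm where "Adm = {T. T \<in> sets (count_space X \<Otimes>\<^sub>M \<mu>) \<and>
                  (\<forall>x\<in>X. emeasure (density \<mu> (\<lambda>z. ennreal (\<omega> x z))) {z \<in> space \<mu>. (x, z) \<in> T}
                          \<ge> ennreal (1 - \<epsilon>))}"
  define Lf where "Lf T = (\<integral>\<^sup>+ z. Max ((\<lambda>x. ennreal (restrict_density T \<omega> x z)) ` X) \<partial>\<mu>)" for T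
  define Ls where "Ls = Imax_smooth \<epsilon> \<mu> X \<omega>"
  have Ls_eq: "Ls = (INF T\<in>Adm. log2e (Lf T))"
    by (simp add: Ls_def Imax_smooth_def Adm_def Imax_def Lf_def)
  have MIeq: "MI = (\<integral> \<xi>. log 2 (gg (Xv \<xi>, Yv \<xi>)) \<partial>J)"
    unfolding MI_def J_def[symmetric] by (rule MI_eq)
  have bnd: "MI \<le> 1 / ln 2 * (2 powr (- real b) * enn2real (Lf T)) + \<epsilon> * real k" if "T \<in> Adm" "Lf T \<noteq> \<infinity>" for T
    unfolding MIeq Lf_def using that \<epsilon> by (intro bound_T) (auto simp: Adm_def Lf_def)
  have Lge: "ennreal (1 - \<epsilon>) \<le> Lf T" if "T \<in> Adm" for T
    using that Lf_ge[OF _ x0, of T] x0 unfolding Adm_def Lf_def by (auto intro: order_trans)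
  have pos: "1 - \<epsilon> \<le> enn2real (Lf T)" if "T \<in> Adm" "Lf T \<noteq> \<infinity>" for T
  proof -
    have "enn2real (ennreal (1 - \<epsilon>)) \<le> enn2real (Lf T)"
      by (rule enn2real_mono[OF Lge[OF that(1)]]) (use that(2) in \<open>simp add: less_top\<close>)
    then show ?thesis using \<epsilon> by simp
  qed
  have log2e_fin: "log2e (Lf T) = ereal (log 2 (enn2real (Lf T)))" if "T \<in> Adm" "Lf T \<noteq> \<infinity>" for T
  proof -
    have "Lf T \<noteq> 0" using pos[OF that] \<epsilon> by auto
    then show ?thesis using that(2) by (simp add: log2e_def)
  qed
  have log_ge: "ereal (log 2 (1 - \<epsilon>)) \<le> log2e (Lf T)" if "T \<in> Adm" for T
  proof (cases "Lf T = \<infinity>")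
    case True then show ?thesis by (simp add: log2e_def)
  next
    case False
    have "log 2 (1 - \<epsilon>) \<le> log 2 (enn2real (Lf T))"
      using pos[OF that False] \<epsilon> by (subst log_le_cancel_iff) auto
    then show ?thesis using log2e_fin[OF that False] by simp
  qed
  have Ls_ge: "ereal (log 2 (1 - \<epsilon>)) \<le> Ls" unfolding Ls_eq by (rule INF_greatest) (rule log_ge)
  show ?thesis
  proof (cases Ls)
    case PInf
    then show ?thesis unfolding Ls_def by (simp add: pow2e_def)
  next
    case MInf
    then show ?thesis using Ls_ge by simp
  next
    case (real r)
    define u where "u n = 1 / ln 2 * (2 powr (- real b) * 2 powr (r + inverse (real (Suc n)))) + \<epsilon> * real k" for n
    have MIu: "MI \<le> u n" for n
    proof -
      have "Ls < ereal (r + inverse (real (Suc n)))" using real by simp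
      then obtain T where T: "T \<in> Adm" and lt: "log2e (Lf T) < ereal (r + inverse (real (Suc n)))"
        unfolding Ls_eq by (auto simp: INF_less_iff)
      have fin: "Lf T \<noteq> \<infinity>" using lt by (auto simp: log2e_def)
      have p: "0 < enn2real (Lf T)" using pos[OF T fin] \<epsilon> by simp
      have "log 2 (enn2real (Lf T)) < r + inverse (real (Suc n))" using lt log2e_fin[OF T fin] by simp
      then have "enn2real (Lf T) < 2 powr (r + inverse (real (Suc n)))"
      proof -
        have "enn2real (Lf T) = 2 powr (log 2 (enn2real (Lf T)))" using p by simp
        also have "\<dots> < 2 powr (r + inverse (real (Suc n)))"
          by (rule powr_less_mono) (use \<open>log 2 (enn2real (Lf T)) < _\<close> in auto)
        finally show ?thesis .
      qed
      then have "1 / ln 2 * (2 powr (- real b) * enn2real (Lf T)) + \<epsilon> * real k \<le> u n"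
        unfolding u_def using \<epsilon> by (intro add_mono mult_left_mono) auto
      then show ?thesis using bnd[OF T fin] by linarith
    qed
    have "u \<longlonglongrightarrow> 1 / ln 2 * (2 powr (- real b) * 2 powr (r + 0)) + \<epsilon> * real k"
      unfolding u_def by (intro tendsto_intros LIMSEQ_inverse_real_of_nat) auto
    then have "MI \<le> 1 / ln 2 * (2 powr (- real b) * 2 powr r) + \<epsilon> * real k"
      by (intro LIMSEQ_le_const[of u]) (auto intro: MIu)
    also have "2 powr (- real b) * 2 powr r = 2 powr (r - real b)" by (simp add: powr_add[symmetric])
    finally have "MI \<le> 1 / ln 2 * 2 powr (r - real b) + \<epsilon> * real k" .
    then show ?thesis using real unfolding Ls_def MI_def[symmetric] by (simp add: pow2e_def)
  qed
qed

end
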